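(* Let $G$ be a finite non-abelian group (written additively) of even order $n$ which possesses a subgroup of index $2$. Then (i) if $n=6$, then $cr(G)=4$ (here $G$ is the symmetric group $S_3$); (ii) otherwise, $cr(G)=n/2$.
   Context: For a subset $S=\{a_1,\dots,a_k\}$ of a finite additively written group $G$, $\sum(S)$ denotes the set of all elements $a_{i_1}+\cdots+a_{i_l}$ with $1\le l\le k$ and $i_1,\dots,i_l$ pairwise distinct indices (in any order). The critical number $cr(G)$ is the smallest integer $t$ such that every subset $S\subseteq G\setminus\{0\}$ with $|S|\ge t$ satisfies $\sum(S)=G$. *)

theory Defs
  imports "HOL-Algebra.Algebra"
begin

text \<open>Product (the group's "sum") of a list of elements, in list order.\<close>
definition list_prod :: "('a, 'b) monoid_scheme \<Rightarrow> 'a list \<Rightarrow> 'a" where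
  "list_prod G xs = foldr (\<lambda>x y. x \<otimes>\<^bsub>G\<^esub> y) xs \<one>\<^bsub>G\<^esub>"

definition subset_sums :: "('a, 'b) monoid_scheme \<Rightarrow> 'a set \<Rightarrow> 'a set" where
  "subset_sums G S = {list_prod G xs | xs. xs \<noteq> [] \<and> distinct xs \<and> set xs \<subseteq> S}"

definition crit_num :: "('a, 'b) monoid_scheme \<Rightarrow> nat" where
  "crit_num G = (LEAST t. \<forall>S. S \<subseteq> carrier G - {\<one>\<^bsub>G\<^esub>} \<longrightarrow> t \<le> card S
                   \<longrightarrow> subset_sums G S = carrier G)"

end

theory Submission
  imports Defs
begin


context group
begin

lemma lp_Nil[simp]: "list_prod G [] = \<one>"
  by (simp add: list_prod_def)

lemma lp_Cons[simp]: "list_prod G (x # xs) = x \<otimes> list_prod G xs"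
  by (simp add: list_prod_def)

lemma lp_closed[intro]: "set xs \<subseteq> carrier G \<Longrightarrow> list_prod G xs \<in> carrier G"
  by (induction xs) auto

lemma lp_append:
  "set xs \<subseteq> carrier G \<Longrightarrow> set ys \<subseteq> carrier G \<Longrightarrow>
   list_prod G (xs @ ys) = list_prod G xs \<otimes> list_prod G ys"
proof (induction xs)
  case Nil then show ?case by (simp add: lp_closed)
next
  case (Cons a xs) then show ?case by (simp add: m_assoc lp_closed)
qed

lemma lp_sub: "subgroup H G \<Longrightarrow> set xs \<subseteq> H \<Longrightarrow> list_prod G xs \<in> H"
  by (induction xs) (auto intro: subgroup.m_closed subgroup.one_closed)

definition psums :: "'a set \<Rightarrow> 'a set" where
  "psums S = {list_prod G xs | xs. distinct xs \<and> set xs \<subseteq> S}"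

lemma psums_eq: "psums S = insert \<one> (subset_sums G S)"
proof
  show "psums S \<subseteq> insert \<one> (subset_sums G S)"
  proof
    fix x assume "x \<in> psums S"
    then obtain xs where "distinct xs" "set xs \<subseteq> S" "x = list_prod G xs"
      unfolding psums_def by blast
    then show "x \<in> insert \<one> (subset_sums G S)"
    proof (cases "xs = []")
      case False
      then have "x \<in> subset_sums G S" using \<open>distinct xs\<close> \<open>set xs \<subseteq> S\<close> \<open>x = _\<close>
        unfolding subset_sums_def by blast
      then show ?thesis by blast
    qed simp
  qed
  show "insert \<one> (subset_sums G S) \<subseteq> psums S"
  proof -
    have "\<one> \<in> psums S" unfolding psums_def
      by (rule CollectI, rule exI[of _ "[]"]) simp
    moreover have "subset_sums G S \<subseteq> psums S"
      unfolding psums_def subset_sums_def by blast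
    ultimately show ?thesis by blast
  qed
qed

lemma one_psums[simp]: "\<one> \<in> psums S"
  by (simp add: psums_eq)

lemma sums_psums: "subset_sums G S \<subseteq> psums S"
  by (auto simp: psums_eq)

lemma sumsI: "distinct xs \<Longrightarrow> xs \<noteq> [] \<Longrightarrow> set xs \<subseteq> S \<Longrightarrow> list_prod G xs \<in> subset_sums G S"
  unfolding subset_sums_def by blast

lemma single_sums: "x \<in> S \<Longrightarrow> S \<subseteq> carrier G \<Longrightarrow> x \<in> subset_sums G S"
  using sumsI[of "[x]" S] by auto

lemma sums_mono: "S \<subseteq> T \<Longrightarrow> subset_sums G S \<subseteq> subset_sums G T"
  unfolding subset_sums_def by blast

lemma psums_mono: "S \<subseteq> T \<Longrightarrow> psums S \<subseteq> psums T"
  unfolding psums_def by blast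

lemma sums_closed: "S \<subseteq> carrier G \<Longrightarrow> subset_sums G S \<subseteq> carrier G"
  unfolding subset_sums_def by auto

lemma psums_closed: "S \<subseteq> carrier G \<Longrightarrow> psums S \<subseteq> carrier G"
  unfolding psums_def by auto

lemma sums_sub: "subgroup H G \<Longrightarrow> S \<subseteq> H \<Longrightarrow> subset_sums G S \<subseteq> H"
  unfolding subset_sums_def using lp_sub by blast

lemma psums_sub: "subgroup H G \<Longrightarrow> S \<subseteq> H \<Longrightarrow> psums S \<subseteq> H"
  unfolding psums_def using lp_sub by blast

lemma psums_mult:
  assumes "A \<inter> B = {}" "A \<subseteq> carrier G" "B \<subseteq> carrier G"
    "p \<in> psums A" "q \<in> psums B"
  shows "p \<otimes> q \<in> psums (A \<union> B)"
proof -
  obtain xs where xs: "distinct xs" "set xs \<subseteq> A" "p = list_prod G xs"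
    using assms(4) unfolding psums_def by blast
  obtain ys where ys: "distinct ys" "set ys \<subseteq> B" "q = list_prod G ys"
    using assms(5) unfolding psums_def by blast
  have "distinct (xs @ ys)" using xs ys assms(1) by auto
  moreover have "set (xs @ ys) \<subseteq> A \<union> B" using xs ys by auto
  moreover have "list_prod G (xs @ ys) = p \<otimes> q"
  proof -
    have "set xs \<subseteq> carrier G" "set ys \<subseteq> carrier G" using xs ys assms(2,3) by auto
    then show ?thesis using lp_append xs ys by simp
  qed
  ultimately show ?thesis unfolding psums_def
    by (intro CollectI exI[of _ "xs @ ys"]) simp
qed

lemma psums_sums_mult:
  assumes "A \<inter> B = {}" "A \<subseteq> carrier G" "B \<subseteq> carrier G"
    "p \<in> psums A" "q \<in> subset_sums G B"
  shows "p \<otimes> q \<in> subset_sums G (A \<union> B)" "q \<otimes> p \<in> subset_sums G (A \<union> B)"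
proof -
  obtain xs where xs: "distinct xs" "set xs \<subseteq> A" "p = list_prod G xs"
    using assms(4) unfolding psums_def by blast
  obtain ys where ys: "distinct ys" "ys \<noteq> []" "set ys \<subseteq> B" "q = list_prod G ys"
    using assms(5) unfolding subset_sums_def by blast
  have f: "distinct (xs @ ys)" "distinct (ys @ xs)" using xs ys assms(1) by auto
  have h: "set (xs @ ys) \<subseteq> A \<union> B" "set (ys @ xs) \<subseteq> A \<union> B" using xs ys by auto
  have cx: "set xs \<subseteq> carrier G" "set ys \<subseteq> carrier G" using xs ys assms(2,3) by auto
  have k: "list_prod G (xs @ ys) = p \<otimes> q" "list_prod G (ys @ xs) = q \<otimes> p"
    using lp_append[OF cx(1) cx(2)] lp_append[OF cx(2) cx(1)] xs ys by simp_all
  have l: "xs @ ys \<noteq> []" "ys @ xs \<noteq> []" using ys by auto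
  show "p \<otimes> q \<in> subset_sums G (A \<union> B)"
    using sumsI[OF f(1) l(1) h(1)] k(1) by simp
  show "q \<otimes> p \<in> subset_sums G (A \<union> B)"
    using sumsI[OF f(2) l(2) h(2)] k(2) by simp
qed

lemma pigeon:
  assumes fin: "finite C" and A: "A \<subseteq> C" "A \<subseteq> carrier G" and B: "finite B" "B \<subseteq> carrier G"
    and g: "g \<in> carrier G" and img: "(\<lambda>y. g \<otimes> inv y) ` B \<subseteq> C"
    and c: "card C < card A + card B"
  shows "\<exists>a\<in>A. \<exists>b\<in>B. g = a \<otimes> b"
proof (rule ccontr)
  assume n: "\<not> ?thesis"
  have inj: "inj_on (\<lambda>y. g \<otimes> inv y) B"
    by (rule inj_onI) (use B g in \<open>auto simp: subset_iff\<close>)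
  have disj: "A \<inter> (\<lambda>y. g \<otimes> inv y) ` B = {}"
  proof (rule ccontr)
    assume "A \<inter> (\<lambda>y. g \<otimes> inv y) ` B \<noteq> {}"
    then obtain a b where ab: "a \<in> A" "b \<in> B" "a = g \<otimes> inv b" by blast
    then have "g = a \<otimes> b" using A B g by (simp add: m_assoc subset_iff)
    then show False using n ab by blast
  qed
  have "card (A \<union> (\<lambda>y. g \<otimes> inv y) ` B) = card A + card B"
    using disj card_image[OF inj] fin A img finite_subset
    by (subst card_Un_disjoint) auto
  moreover have "card (A \<union> (\<lambda>y. g \<otimes> inv y) ` B) \<le> card C"
    using A img fin by (intro card_mono) auto
  ultimately show False using c by simp
qed

lemma pigeon_tight:
  assumes fin: "finite C" and A: "A \<subseteq> C" "A \<subseteq> carrier G" and B: "finite B" "B \<subseteq> carrier G"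
    and g: "g \<in> carrier G" and img: "(\<lambda>y. g \<otimes> inv y) ` B \<subseteq> C"
    and c: "card C \<le> card A + card B"
    and n: "\<And>a b. a \<in> A \<Longrightarrow> b \<in> B \<Longrightarrow> g \<noteq> a \<otimes> b"
    and x: "x \<in> C" "x \<notin> A"
  shows "\<exists>b\<in>B. x = g \<otimes> inv b"
proof -
  have inj: "inj_on (\<lambda>y. g \<otimes> inv y) B"
    by (rule inj_onI) (use B g in \<open>auto simp: subset_iff\<close>)
  have disj: "A \<inter> (\<lambda>y. g \<otimes> inv y) ` B = {}"
  proof (rule ccontr)
    assume "A \<inter> (\<lambda>y. g \<otimes> inv y) ` B \<noteq> {}"
    then obtain a b where ab: "a \<in> A" "b \<in> B" "a = g \<otimes> inv b" by blast
    then have "g = a \<otimes> b" using A B g by (simp add: m_assoc subset_iff)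
    then show False using n ab by blast
  qed
  have "card (A \<union> (\<lambda>y. g \<otimes> inv y) ` B) = card A + card B"
    using disj card_image[OF inj] fin A img finite_subset
    by (subst card_Un_disjoint) auto
  have "A \<union> (\<lambda>y. g \<otimes> inv y) ` B = C"
  proof (rule card_subset_eq[OF fin])
    show "A \<union> (\<lambda>y. g \<otimes> inv y) ` B \<subseteq> C" using A img by auto
    then have "card (A \<union> (\<lambda>y. g \<otimes> inv y) ` B) \<le> card C" using fin by (intro card_mono)
    then show "card (A \<union> (\<lambda>y. g \<otimes> inv y) ` B) = card C" using c \<open>card (A \<union> _) = _\<close> by simp
  qed
  then show ?thesis using x by auto
qed

end


lemma card2_eq:
  assumes "card Zs = 2" "x \<in> Zs" "y \<in> Zs" "z \<in> Zs" "y \<noteq> x" "z \<noteq> x"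
  shows "y = z"
proof (rule ccontr)
  assume yz: "y \<noteq> z"
  have fin: "finite Zs" using assms(1) by (metis card.infinite zero_neq_numeral)
  have "{x, y, z} \<subseteq> Zs" using assms by auto
  then have "card {x, y, z} \<le> card Zs" using fin by (intro card_mono)
  moreover have "card {x, y, z} = 3" using yz assms by auto
  ultimately show False using assms(1) by simp
qed

locale idx2 = group G for G (structure) +
  fixes H
  assumes fin: "finite (carrier G)" and sub: "subgroup H G" and idx: "card (rcosets H) = 2"
begin

lemma Hsub: "H \<subseteq> carrier G"
  by (rule subgroup.subset[OF sub])

lemma Hone[simp]: "\<one> \<in> H"
  by (rule subgroup.one_closed[OF sub])

lemma Hm: "a \<in> H \<Longrightarrow> b \<in> H \<Longrightarrow> a \<otimes> b \<in> H"
  by (rule subgroup.m_closed[OF sub])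

lemma Hinv: "a \<in> H \<Longrightarrow> inv a \<in> H"
  by (rule subgroup.m_inv_closed[OF sub])

lemma Hinv_iff: assumes "a \<in> carrier G" shows "inv a \<in> H \<longleftrightarrow> a \<in> H"
proof
  assume "inv a \<in> H"
  then show "a \<in> H" using Hinv[of "inv a"] inv_inv assms by simp
next
  assume "a \<in> H" then show "inv a \<in> H" by (rule Hinv)
qed

lemma in_out: assumes "a \<in> H" "b \<in> carrier G" "b \<notin> H"
  shows "a \<otimes> b \<notin> H" "b \<otimes> a \<notin> H"
proof -
  have a: "a \<in> carrier G" using assms Hsub by auto
  show "a \<otimes> b \<notin> H"
  proof
    assume "a \<otimes> b \<in> H"
    then have "inv a \<otimes> (a \<otimes> b) \<in> H" by (rule Hm[OF Hinv[OF assms(1)]])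
    then show False using assms a by (simp add: m_assoc[symmetric])
  qed
  show "b \<otimes> a \<notin> H"
  proof
    assume "b \<otimes> a \<in> H"
    then have "(b \<otimes> a) \<otimes> inv a \<in> H" by (rule Hm[OF _ Hinv[OF assms(1)]])
    then show False using assms a by (simp add: m_assoc)
  qed
qed

lemma out_out: assumes "a \<in> carrier G" "a \<notin> H" "b \<in> carrier G" "b \<notin> H"
  shows "a \<otimes> b \<in> H"
proof -
  have ib: "inv b \<in> carrier G" "inv b \<notin> H" using assms Hinv_iff by auto
  have "H #> a \<noteq> H" using rcos_self[OF assms(1) sub] assms by auto
  moreover have "H #> inv b \<noteq> H" using rcos_self[OF ib(1) sub] ib by auto
  moreover have "H \<in> rcosets H"
    using rcosetsI[OF Hsub one_closed] coset_mult_one[OF Hsub] by simp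
  moreover have "H #> a \<in> rcosets H" "H #> inv b \<in> rcosets H"
    using rcosetsI[OF Hsub] assms ib by auto
  ultimately have "H #> a = H #> inv b" using card2_eq[OF idx] by blast
  then have "a \<in> H #> inv b" using rcos_self[OF assms(1) sub] by simp
  then obtain h where h: "h \<in> H" "a = h \<otimes> inv b" unfolding r_coset_def by blast
  then have "a \<otimes> b = h" using assms Hsub by (simp add: m_assoc subset_iff)
  then show ?thesis using h by simp
qed

lemma out_exists: "\<exists>u. u \<in> carrier G \<and> u \<notin> H"
proof (rule ccontr)
  assume "\<not> ?thesis"
  then have "H = carrier G" using Hsub by auto
  then have "rcosets H = {H}"
    unfolding RCOSETS_def using coset_join2[OF _ sub] Hsub by auto
  then show False using idx by simp
qed

lemma order_eq: "order G = 2 * card H"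
  using lagrange[OF sub] idx by simp

lemma card_out: "card (carrier G - H) = card H"
  using order_eq Hsub fin unfolding order_def by (simp add: card_Diff_subset finite_subset)

lemma abelian_crit:
  assumes u: "u \<in> carrier G" "u \<notin> H"
    and cu: "\<And>h. h \<in> H \<Longrightarrow> u \<otimes> h = h \<otimes> u"
    and ch: "\<And>h k. h \<in> H \<Longrightarrow> k \<in> H \<Longrightarrow> h \<otimes> k = k \<otimes> h"
  shows "comm_group G"
proof (rule group_comm_groupI)
  have rep: "\<exists>h\<in>H. x = h \<or> x = u \<otimes> h" if "x \<in> carrier G" for x
  proof (cases "x \<in> H")
    case False
    have "inv u \<otimes> x \<in> H" using out_out[of "inv u" x] u that False Hinv_iff by auto
    moreover have "x = u \<otimes> (inv u \<otimes> x)" using u that by (simp add: m_assoc[symmetric])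
    ultimately show ?thesis by blast
  qed auto
  fix x y assume x: "x \<in> carrier G" and y: "y \<in> carrier G"
  obtain h where h: "h \<in> H" "x = h \<or> x = u \<otimes> h" using rep[OF x] by blast
  obtain k where k: "k \<in> H" "y = k \<or> y = u \<otimes> k" using rep[OF y] by blast
  have hc: "h \<in> carrier G" "k \<in> carrier G" using h k Hsub by auto
  have cuh: "u \<otimes> h = h \<otimes> u" "u \<otimes> k = k \<otimes> u" using cu h k by auto
  have hk: "h \<otimes> k = k \<otimes> h" using ch h k by auto
  have A1: "h \<otimes> (u \<otimes> k) = (u \<otimes> k) \<otimes> h"
  proof -
    have "h \<otimes> (u \<otimes> k) = (h \<otimes> u) \<otimes> k" using hc u by (simp add: m_assoc)
    also have "\<dots> = (u \<otimes> h) \<otimes> k" using cuh by simp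
    also have "\<dots> = u \<otimes> (h \<otimes> k)" using hc u by (simp add: m_assoc)
    also have "\<dots> = u \<otimes> (k \<otimes> h)" using hk by simp
    also have "\<dots> = (u \<otimes> k) \<otimes> h" using hc u by (simp add: m_assoc)
    finally show ?thesis .
  qed
  have A2: "(u \<otimes> h) \<otimes> k = k \<otimes> (u \<otimes> h)"
  proof -
    have "(u \<otimes> h) \<otimes> k = u \<otimes> (h \<otimes> k)" using hc u by (simp add: m_assoc)
    also have "\<dots> = u \<otimes> (k \<otimes> h)" using hk by simp
    also have "\<dots> = (u \<otimes> k) \<otimes> h" using hc u by (simp add: m_assoc)
    also have "\<dots> = (k \<otimes> u) \<otimes> h" using cuh by simp
    also have "\<dots> = k \<otimes> (u \<otimes> h)" using hc u by (simp add: m_assoc)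
    finally show ?thesis .
  qed
  have A3: "(u \<otimes> h) \<otimes> (u \<otimes> k) = (u \<otimes> k) \<otimes> (u \<otimes> h)"
  proof -
    have "(u \<otimes> h) \<otimes> (u \<otimes> k) = u \<otimes> ((h \<otimes> u) \<otimes> k)" using hc u by (simp add: m_assoc)
    also have "\<dots> = u \<otimes> ((u \<otimes> h) \<otimes> k)" using cuh by simp
    also have "\<dots> = u \<otimes> (u \<otimes> (h \<otimes> k))" using hc u by (simp add: m_assoc)
    also have "\<dots> = u \<otimes> (u \<otimes> (k \<otimes> h))" using hk by simp
    also have "\<dots> = u \<otimes> ((u \<otimes> k) \<otimes> h)" using hc u by (simp add: m_assoc)
    also have "\<dots> = u \<otimes> ((k \<otimes> u) \<otimes> h)" using cuh by simp
    also have "\<dots> = (u \<otimes> k) \<otimes> (u \<otimes> h)" using hc u by (simp add: m_assoc)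
    finally show ?thesis .
  qed
  from h k show "x \<otimes> y = y \<otimes> x"
    using hk A1 A2 A3 by (elim disjE) auto
qed

end


context group
begin

lemma psums_single: "x \<in> carrier G \<Longrightarrow> x \<in> psums {x}"
  unfolding psums_def by (intro CollectI exI[of _ "[x]"]) simp

lemma sums_single: "x \<in> carrier G \<Longrightarrow> x \<in> subset_sums G {x}"
  unfolding subset_sums_def by (intro CollectI exI[of _ "[x]"]) simp

lemma psums_empty: "psums {} = {\<one>}"
  unfolding psums_def by auto

lemma sums_list2:
  assumes "x \<in> S" "y \<in> S" "x \<noteq> y" "S \<subseteq> carrier G"
  shows "x \<otimes> y \<in> subset_sums G S"
  using sumsI[of "[x,y]" S] assms by auto

lemma sums_list3:
  assumes "x \<in> S" "y \<in> S" "z \<in> S" "x \<noteq> y" "x \<noteq> z" "y \<noteq> z" "S \<subseteq> carrier G"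
  shows "x \<otimes> (y \<otimes> z) \<in> subset_sums G S"
  using sumsI[of "[x,y,z]" S] assms by (auto simp: subset_iff)

lemma sums_list4:
  assumes "x \<in> S" "y \<in> S" "z \<in> S" "w \<in> S" "x \<noteq> y" "x \<noteq> z" "y \<noteq> z"
    "x \<noteq> w" "y \<noteq> w" "z \<noteq> w" "S \<subseteq> carrier G"
  shows "x \<otimes> (y \<otimes> (z \<otimes> w)) \<in> subset_sums G S"
  using sumsI[of "[x,y,z,w]" S] assms by (auto simp: subset_iff)

end

locale upper = idx2 +
  fixes S
  assumes S: "S \<subseteq> carrier G - {\<one>}" and cS: "card H \<le> card S"
begin

definition "S0 = S \<inter> H"
definition "Y = S - H"
definition "K = psums S0"

lemma finS: "finite S" using S by (intro finite_subset[OF _ fin]) auto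
lemma finH: "finite H" using Hsub by (intro finite_subset[OF _ fin])
lemma S0H: "S0 \<subseteq> H" "\<one> \<notin> S0" using S unfolding S0_def by auto
lemma S0c: "S0 \<subseteq> carrier G" using S0H Hsub by auto
lemma finS0: "finite S0" using finS unfolding S0_def by auto
lemma finY: "finite Y" using finS unfolding Y_def by auto
lemma Yc: "Y \<subseteq> carrier G" "\<And>y. y \<in> Y \<Longrightarrow> y \<notin> H" using S unfolding Y_def by auto
lemma S_split: "S = S0 \<union> Y" "S0 \<inter> Y = {}" unfolding S0_def Y_def by auto
lemma card_split: "card S = card S0 + card Y"
  using S_split finS0 finY card_Un_disjoint by metis
lemma Sc: "S \<subseteq> carrier G" using S by auto

lemma card_S0: "card S0 + 1 \<le> card H"
proof -
  have "S0 \<subseteq> H - {\<one>}" using S0H by auto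
  then have "card S0 \<le> card (H - {\<one>})" using finH by (intro card_mono) auto
  moreover have "card (H - {\<one>}) = card H - 1" using finH Hone by simp
  moreover have "card H \<noteq> 0" using finH Hone by (metis card_0_eq empty_iff)
  ultimately show ?thesis by linarith
qed

lemma KH: "K \<subseteq> H" unfolding K_def using psums_sub[OF sub S0H(1)] .
lemma Kc: "K \<subseteq> carrier G" using KH Hsub by auto
lemma finK: "finite K" by (rule finite_subset[OF KH finH])
lemma K1: "insert \<one> S0 \<subseteq> K"
  unfolding K_def using psums_mono[of "{x}" S0 for x] psums_single S0c by auto
lemma cardK: "card S0 + 1 \<le> card K"
proof -
  have "card (insert \<one> S0) = card S0 + 1" using S0H finS0 by simp
  then show ?thesis using card_mono[OF finK K1] by simp
qed

lemma Y_ne: "Y \<noteq> {}"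
  using card_split cS card_S0 by auto

lemma kY: assumes "k \<in> K" "y \<in> Y" shows "k \<otimes> y \<in> subset_sums G S" "y \<otimes> k \<in> subset_sums G S"
proof -
  have d: "S0 \<inter> {y} = {}" using assms S_split by auto
  have yc: "y \<in> carrier G" using assms Yc by auto
  have "k \<otimes> y \<in> subset_sums G (S0 \<union> {y})" "y \<otimes> k \<in> subset_sums G (S0 \<union> {y})"
    using psums_sums_mult[OF d S0c _ _ sums_single[OF yc]] assms yc unfolding K_def by auto
  moreover have "S0 \<union> {y} \<subseteq> S" using assms S_split by auto
  ultimately show "k \<otimes> y \<in> subset_sums G S" "y \<otimes> k \<in> subset_sums G S"
    using sums_mono by blast+
qed

lemma kYY: assumes "k \<in> K" "u \<in> Y" "v \<in> Y" "u \<noteq> v"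
  shows "u \<otimes> k \<otimes> v \<in> subset_sums G S" "k \<otimes> (u \<otimes> v) \<in> subset_sums G S"
proof -
  have uc: "u \<in> carrier G" "v \<in> carrier G" using assms Yc by auto
  have d1: "{u} \<inter> S0 = {}" using assms S_split by auto
  have "u \<otimes> k \<in> psums ({u} \<union> S0)"
    using psums_mult[OF d1 _ S0c psums_single[OF uc(1)]] assms uc unfolding K_def by auto
  moreover have d2: "({u} \<union> S0) \<inter> {v} = {}" using assms S_split by auto
  ultimately have "u \<otimes> k \<otimes> v \<in> subset_sums G ({u} \<union> S0 \<union> {v})"
    using psums_sums_mult(1)[OF d2 _ _ _ sums_single[OF uc(2)]] uc S0c by auto
  moreover have "{u} \<union> S0 \<union> {v} \<subseteq> S" using assms S_split by auto
  ultimately show "u \<otimes> k \<otimes> v \<in> subset_sums G S" using sums_mono by blast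
  have d3: "S0 \<inter> {u, v} = {}" using assms S_split by auto
  have "u \<otimes> v \<in> subset_sums G {u, v}" using sums_list2[of u "{u,v}" v] uc assms by auto
  then have "k \<otimes> (u \<otimes> v) \<in> subset_sums G (S0 \<union> {u, v})"
    using psums_sums_mult(1)[OF d3 S0c] uc assms unfolding K_def by auto
  moreover have "S0 \<union> {u, v} \<subseteq> S" using assms S_split by auto
  ultimately show "k \<otimes> (u \<otimes> v) \<in> subset_sums G S" using sums_mono by blast
qed

lemma kuv: assumes "k \<in> K" "u \<in> Y" "v \<in> Y" "u \<noteq> v"
  shows "k \<otimes> u \<otimes> v \<in> subset_sums G S"
  using kYY(2)[OF assms] assms Kc Yc by (simp add: m_assoc subset_iff)

lemma out_covered: assumes "g \<in> carrier G" "g \<notin> H" shows "g \<in> subset_sums G S"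
proof -
  have img: "(\<lambda>y. g \<otimes> inv y) ` Y \<subseteq> H"
    using out_out assms Yc Hinv_iff by auto
  have "card H < card K + card Y" using cardK card_split cS by simp
  then obtain k y where "k \<in> K" "y \<in> Y" "g = k \<otimes> y"
    using pigeon[OF finH KH Kc finY Yc(1) assms(1) img] by blast
  then show ?thesis using kY by simp
qed

lemma big: assumes "card H < card S" "g \<in> H" shows "g \<in> subset_sums G S"
proof -
  obtain u where u: "u \<in> Y" using Y_ne by blast
  have uc: "u \<in> carrier G" "u \<notin> H" using u Yc by auto
  have gc: "g \<in> carrier G" using assms Hsub by auto
  let ?h = "inv u \<otimes> g"
  have hc: "?h \<in> carrier G" "?h \<notin> H" using in_out(2)[OF assms(2), of "inv u"] uc gc Hinv_iff by auto
  have img: "(\<lambda>y. ?h \<otimes> inv y) ` (Y - {u}) \<subseteq> H"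
    using out_out hc Yc Hinv_iff by auto
  have "card (Y - {u}) = card Y - 1" using u finY by simp
  then have "card H < card K + card (Y - {u})" using cardK card_split assms Y_ne u finY
    by (simp add: card_gt_0_iff)
  then obtain k v where kv: "k \<in> K" "v \<in> Y - {u}" "?h = k \<otimes> v"
    using pigeon[OF finH KH Kc _ _ hc(1) img] finY Yc by blast
  have "g = u \<otimes> ?h" using uc gc by (simp add: m_assoc[symmetric])
  also have "\<dots> = u \<otimes> k \<otimes> v" using kv uc Kc Yc by (simp add: m_assoc subset_iff)
  finally show ?thesis using kYY(1)[of k u v] kv u by auto
qed

end


lemma avoid: "finite A \<Longrightarrow> finite B \<Longrightarrow> card B < card A \<Longrightarrow> \<exists>x\<in>A. x \<notin> B"
  by (metis card_mono not_le subsetI)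

context group
begin

lemma mult_eq_one: "x \<in> carrier G \<Longrightarrow> y \<in> carrier G \<Longrightarrow> x \<otimes> y = \<one> \<longleftrightarrow> y = inv x"
  using inv_equality[OF inv_comm] by auto

end

context idx2
begin

lemma one_in_sums: assumes "3 \<le> card H" shows "\<one> \<in> subset_sums G (H - {\<one>})"
proof -
  have finH: "finite H" using Hsub by (intro finite_subset[OF _ fin])
  have c1: "card (H - {\<one>}) = card H - 1" using finH by simp
  have Hc: "H - {\<one>} \<subseteq> carrier G" using Hsub by auto
  show ?thesis
  proof (cases "\<exists>h\<in>H - {\<one>}. inv h \<noteq> h")
    case True
    then obtain h where h: "h \<in> H" "h \<noteq> \<one>" "inv h \<noteq> h" by blast
    have hc: "h \<in> carrier G" using h Hsub by auto
    have "inv h \<in> H - {\<one>}" using h Hinv hc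
      by (metis DiffI inv_one inv_inv one_closed singletonD)
    then have "h \<otimes> inv h \<in> subset_sums G (H - {\<one>})"
      using sums_list2[OF _ _ h(3)[symmetric] Hc] h by auto
    then show ?thesis using hc by simp
  next
    case False
    then have invs: "\<And>h. h \<in> H \<Longrightarrow> h \<noteq> \<one> \<Longrightarrow> inv h = h" by blast
    obtain h1 where h1: "h1 \<in> H - {\<one>}" using avoid[of "H - {\<one>}" "{}"] c1 assms finH by auto
    have "card {h1} < card (H - {\<one>})" using c1 assms by simp
    then obtain h2 where h2: "h2 \<in> H - {\<one>}" "h2 \<noteq> h1"
      using avoid[of "H - {\<one>}" "{h1}"] finH by auto
    have c: "h1 \<in> carrier G" "h2 \<in> carrier G" using h1 h2 Hsub by auto
    let ?h3 = "h1 \<otimes> h2"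
    have h3H: "?h3 \<in> H" using h1 h2 Hm by auto
    have h3n1: "?h3 \<noteq> \<one>"
    proof
      assume "?h3 = \<one>"
      then have "h2 = inv h1" using c mult_eq_one by blast
      then show False using invs h1 h2 by auto
    qed
    have h31: "?h3 \<noteq> h1" using c h2 by simp
    have h32: "?h3 \<noteq> h2" using c h1 by simp
    have "h1 \<otimes> (h2 \<otimes> ?h3) \<in> subset_sums G (H - {\<one>})"
      using sums_list3[OF h1 _ _ h2(2)[symmetric] h31[symmetric] h32[symmetric] Hc] h2 h3H h3n1 by auto
    moreover have "h1 \<otimes> (h2 \<otimes> ?h3) = ?h3 \<otimes> ?h3" using c by (simp add: m_assoc)
    moreover have "?h3 \<otimes> ?h3 = \<one>"
    proof -
      have "inv ?h3 = ?h3" using invs h3H h3n1 by auto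
      then show ?thesis using h3H Hsub by (metis r_inv subsetD)
    qed
    ultimately show ?thesis by simp
  qed
qed

end


locale bad = upper +
  assumes eq: "card S = card H" and nab: "\<not> comm_group G" and m4: "4 \<le> card H"
  fixes g assumes gH: "g \<in> H" and gn: "g \<notin> subset_sums G S"
begin

lemma gc: "g \<in> carrier G" using gH Hsub by auto

lemma ab: "card S0 + card Y = card H" using eq card_split by simp

lemma b2: "2 \<le> card Y"
proof (rule ccontr)
  assume "\<not> 2 \<le> card Y"
  then have "card Y = 1" using ab card_S0 by linarith
  then have cs: "card S0 = card H - 1" using ab by linarith
  have "S0 = H - {\<one>}"
  proof (rule card_subset_eq)
    show "finite (H - {\<one>})" using finH by simp
    show "S0 \<subseteq> H - {\<one>}" using S0H by auto
    show "card S0 = card (H - {\<one>})" using cs finH by simp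
  qed
  show False
  proof (cases "g = \<one>")
    case True
    have "\<one> \<in> subset_sums G S0" using one_in_sums m4 \<open>S0 = _\<close> by simp
    then show False using True gn sums_mono S_split by blast
  next
    case False
    then have "g \<in> S" using gH \<open>S0 = _\<close> S_split by auto
    then show False using gn single_sums Sc by blast
  qed
qed

lemma T3: assumes u: "u \<in> Y"
  shows "(\<lambda>k. k \<otimes> u) ` K \<subseteq> (\<lambda>k. u \<otimes> k) ` K" "card K \<le> card S0 + 1"
proof -
  have uc: "u \<in> carrier G" "u \<notin> H" using u Yc by auto
  let ?X = "(\<lambda>k. u \<otimes> k) ` K \<union> (\<lambda>k. k \<otimes> u) ` K"
  have XC: "?X \<subseteq> carrier G - H" using in_out uc KH Kc by auto
  have Xc: "?X \<subseteq> carrier G" using XC by auto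
  have finC: "finite (carrier G - H)" using fin by simp
  have finX: "finite ?X" using finK by simp
  have img: "(\<lambda>y. g \<otimes> inv y) ` (Y - {u}) \<subseteq> carrier G - H"
  proof (rule image_subsetI)
    fix y assume y: "y \<in> Y - {u}"
    then have yc: "y \<in> carrier G" "y \<notin> H" using Yc by auto
    then have "inv y \<in> carrier G" "inv y \<notin> H" using Hinv_iff by auto
    then show "g \<otimes> inv y \<in> carrier G - H" using in_out(1)[OF gH] gc by auto
  qed
  have nle: "\<not> card (carrier G - H) < card ?X + card (Y - {u})"
  proof
    assume "card (carrier G - H) < card ?X + card (Y - {u})"
    then obtain x v where xv: "x \<in> ?X" "v \<in> Y - {u}" "g = x \<otimes> v"
      using pigeon[OF finC XC Xc _ _ gc img] finY Yc by blast
    then show False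
    proof (cases "x \<in> (\<lambda>k. u \<otimes> k) ` K")
      case True
      then obtain k where "k \<in> K" "x = u \<otimes> k" by blast
      then show False using kYY(1)[of k u v] xv u gn by auto
    next
      case False
      then obtain k where "k \<in> K" "x = k \<otimes> u" using xv by blast
      then show False using kuv[of k u v] xv u gn by auto
    qed
  qed
  have cY: "card (Y - {u}) = card Y - 1" using u finY by simp
  then have cX: "card ?X \<le> card S0 + 1" using nle card_out ab b2 by linarith
  have inj: "inj_on (\<lambda>k. u \<otimes> k) K" using uc Kc by (intro inj_onI) (auto simp: subset_iff)
  have c1: "card ((\<lambda>k. u \<otimes> k) ` K) = card K" using card_image[OF inj] .
  have sub1: "(\<lambda>k. u \<otimes> k) ` K \<subseteq> ?X" by blast
  have "card ((\<lambda>k. u \<otimes> k) ` K) \<le> card ?X" using card_mono[OF finX sub1] .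
  then show "card K \<le> card S0 + 1" using c1 cX by simp
  have "card ?X \<le> card ((\<lambda>k. u \<otimes> k) ` K)" using c1 cX cardK by simp
  then have "(\<lambda>k. u \<otimes> k) ` K = ?X"
    using card_subset_eq[OF finX sub1] card_mono[OF finX sub1] by linarith
  then show "(\<lambda>k. k \<otimes> u) ` K \<subseteq> (\<lambda>k. u \<otimes> k) ` K" by blast
qed

lemma Keq: "K = insert \<one> S0"
proof -
  obtain u where "u \<in> Y" using Y_ne by blast
  then have "card K \<le> card S0 + 1" using T3 by blast
  moreover have "card (insert \<one> S0) = card S0 + 1" using S0H finS0 by simp
  ultimately show ?thesis using card_subset_eq[OF finK K1] card_mono[OF finK K1] by simp
qed

lemma conjK: assumes "u \<in> Y" "k \<in> K" shows "inv u \<otimes> k \<otimes> u \<in> K"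
proof -
  have "k \<otimes> u \<in> (\<lambda>k. u \<otimes> k) ` K" using T3(1)[OF assms(1)] assms(2) by blast
  then obtain k' where k': "k' \<in> K" "k \<otimes> u = u \<otimes> k'" by blast
  have c: "u \<in> carrier G" "k \<in> carrier G" "k' \<in> carrier G" using assms Yc Kc k' by auto
  have "inv u \<otimes> k \<otimes> u = inv u \<otimes> (k \<otimes> u)" using c by (simp add: m_assoc)
  also have "\<dots> = k'" using k' c by (simp add: m_assoc[symmetric])
  finally show ?thesis using k' by simp
qed

lemma R1: "subset_sums G S0 \<subseteq> insert \<one> S0"
proof -
  have "subset_sums G S0 \<subseteq> psums S0" by (rule sums_psums)
  then show ?thesis using Keq unfolding K_def by simp
qed

definition "D = {u \<otimes> v | u v. u \<in> Y \<and> v \<in> Y \<and> u \<noteq> v}"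

lemma DH: "D \<subseteq> H" unfolding D_def using out_out Yc by auto
lemma Dc: "D \<subseteq> carrier G" using DH Hsub by auto
lemma finD: "finite D" by (rule finite_subset[OF DH finH])

lemma KD: assumes "k \<in> K" "d \<in> D" shows "g \<noteq> k \<otimes> d"
proof
  assume "g = k \<otimes> d"
  moreover obtain u v where "u \<in> Y" "v \<in> Y" "u \<noteq> v" "d = u \<otimes> v" using assms(2) unfolding D_def by blast
  ultimately show False using kYY(2)[OF assms(1)] gn by auto
qed

lemma cardD: "card K + card D \<le> card H"
proof (rule ccontr)
  assume "\<not> ?thesis"
  then have "card H < card K + card D" by simp
  moreover have img: "(\<lambda>y. g \<otimes> inv y) ` D \<subseteq> H" using DH gH Hm Hinv by auto
  ultimately obtain k d where "k \<in> K" "d \<in> D" "g = k \<otimes> d"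
    using pigeon[OF finH KH Kc finD Dc gc img] by blast
  then show False using KD by blast
qed

lemma Dl: assumes "u \<in> Y" shows "(\<lambda>v. u \<otimes> v) ` (Y - {u}) = D" "card D = card Y - 1"
proof -
  have uc: "u \<in> carrier G" using assms Yc by auto
  have sub1: "(\<lambda>v. u \<otimes> v) ` (Y - {u}) \<subseteq> D" unfolding D_def using assms by blast
  have inj: "inj_on (\<lambda>v. u \<otimes> v) (Y - {u})" using uc Yc by (intro inj_onI) (auto simp: subset_iff)
  have c1: "card ((\<lambda>v. u \<otimes> v) ` (Y - {u})) = card Y - 1"
    using card_image[OF inj] assms finY by simp
  have "card D \<le> card Y - 1" using cardD cardK ab by linarith
  then show "(\<lambda>v. u \<otimes> v) ` (Y - {u}) = D" using card_subset_eq[OF finD sub1] c1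
    card_mono[OF finD sub1] by simp
  then show "card D = card Y - 1" using c1 by simp
qed

lemma Dr: assumes "u \<in> Y" shows "(\<lambda>v. v \<otimes> u) ` (Y - {u}) = D"
proof -
  have uc: "u \<in> carrier G" using assms Yc by auto
  have sub1: "(\<lambda>v. v \<otimes> u) ` (Y - {u}) \<subseteq> D" unfolding D_def using assms by blast
  have inj: "inj_on (\<lambda>v. v \<otimes> u) (Y - {u})" using uc Yc by (intro inj_onI) (auto simp: subset_iff)
  have c1: "card ((\<lambda>v. v \<otimes> u) ` (Y - {u})) = card Y - 1"
    using card_image[OF inj] assms finY by simp
  then show ?thesis using card_subset_eq[OF finD sub1] Dl(2)[OF assms] by simp
qed

lemma TK: assumes "h \<in> H" "h \<notin> K" shows "\<exists>d\<in>D. h = g \<otimes> inv d"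
proof -
  have img: "(\<lambda>y. g \<otimes> inv y) ` D \<subseteq> H" using DH gH Hm Hinv by auto
  obtain u where u: "u \<in> Y" using Y_ne by blast
  have "card H \<le> card K + card D" using Dl(2)[OF u] cardK ab b2 by linarith
  then show ?thesis using pigeon_tight[OF finH KH Kc finD Dc gc img _ _ assms] KD by blast
qed

end


context group
begin

lemma lc1: "y \<in> carrier G \<Longrightarrow> w \<in> carrier G \<Longrightarrow> inv y \<otimes> (y \<otimes> w) = w"
  by (simp add: m_assoc[symmetric])

lemma lc2: "y \<in> carrier G \<Longrightarrow> w \<in> carrier G \<Longrightarrow> y \<otimes> (inv y \<otimes> w) = w"
  by (simp add: m_assoc[symmetric])

lemma comm_inv: assumes "x \<in> carrier G" "y \<in> carrier G" "x \<otimes> y = y \<otimes> x"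
  shows "x \<otimes> inv y = inv y \<otimes> x"
proof -
  have c: "x \<otimes> inv y \<in> carrier G" using assms by simp
  have "x \<otimes> inv y = inv y \<otimes> (y \<otimes> (x \<otimes> inv y))" using lc1[OF assms(2) c] by simp
  also have "\<dots> = inv y \<otimes> ((y \<otimes> x) \<otimes> inv y)" using assms(1,2) by (simp add: m_assoc)
  also have "\<dots> = inv y \<otimes> ((x \<otimes> y) \<otimes> inv y)" using assms(3) by simp
  also have "\<dots> = inv y \<otimes> (x \<otimes> (y \<otimes> inv y))" using assms(1,2) by (simp add: m_assoc)
  also have "\<dots> = inv y \<otimes> x" using assms(1,2) by simp
  finally show ?thesis .
qed

lemma comm_mult: assumes "x \<in> carrier G" "y \<in> carrier G" "z \<in> carrier G"
  "x \<otimes> y = y \<otimes> x" "x \<otimes> z = z \<otimes> x"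
  shows "x \<otimes> (y \<otimes> z) = (y \<otimes> z) \<otimes> x"
proof -
  have "x \<otimes> (y \<otimes> z) = (x \<otimes> y) \<otimes> z" using assms(1-3) by (simp add: m_assoc)
  also have "\<dots> = (y \<otimes> x) \<otimes> z" using assms(4) by (rule arg_cong[where f="\<lambda>t. t \<otimes> z"])
  also have "\<dots> = y \<otimes> (x \<otimes> z)" using assms(1-3) by (simp add: m_assoc)
  also have "\<dots> = y \<otimes> (z \<otimes> x)" using assms(5) by (rule arg_cong[where f="\<lambda>t. y \<otimes> t"])
  also have "\<dots> = (y \<otimes> z) \<otimes> x" using assms(1-3) by (simp add: m_assoc)
  finally show ?thesis .
qed

lemma pow_comm: assumes "a \<in> carrier G" "s \<in> carrier G" "a \<otimes> s = s \<otimes> a"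
  "x \<in> {\<one>, s, inv s, s \<otimes> s}"
  shows "a \<otimes> x = x \<otimes> a"
proof -
  have "x = \<one> \<or> x = s \<or> x = inv s \<or> x = s \<otimes> s" using assms(4) by blast
  then show ?thesis
  proof (elim disjE)
    assume "x = \<one>" then show ?thesis using assms(1) by simp
  next
    assume "x = s" then show ?thesis using assms(3) by simp
  next
    assume "x = inv s" then show ?thesis using comm_inv[OF assms(1,2,3)] by simp
  next
    assume "x = s \<otimes> s" then show ?thesis using comm_mult[OF assms(1,2,2,3,3)] by simp
  qed
qed

end

context bad
begin

lemma caseB2: assumes cY: "card Y = 2" shows False
proof -
  have "\<exists>x y. Y = {x, y} \<and> x \<noteq> y" using cY by (simp only: card_2_iff)
  then obtain u v where uv: "Y = {u, v}" "u \<noteq> v" by blast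
  have uY: "u \<in> Y" "v \<in> Y" using uv by auto
  have uc: "u \<in> carrier G" "v \<in> carrier G" "u \<notin> H" "v \<notin> H" using uY Yc by auto
  let ?d = "u \<otimes> v"
  have Dd: "D = {?d}" using Dl(1)[OF uY(1)] uv by auto
  have "D = {v \<otimes> u}" using Dr[OF uY(1)] uv by auto
  then have uvc: "u \<otimes> v = v \<otimes> u" using Dd by auto
  have dc: "?d \<in> carrier G" "?d \<in> H" using uc out_out by auto
  define z where "z = g \<otimes> inv ?d"
  have zc: "z \<in> carrier G" "z \<in> H" unfolding z_def using gc gH dc Hm Hinv by auto
  have zd: "z \<otimes> ?d = g" unfolding z_def using gc dc by (simp add: m_assoc)
  have zK: "z \<notin> K" using KD[of z ?d] zd Dd by auto
  have Hz: "h \<in> K \<or> h = z" if hH: "h \<in> H" for h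
  proof (cases "h \<in> K")
    case False
    obtain d where "d \<in> D" "h = g \<otimes> inv d" using TK[OF hH False] by blast
    then show ?thesis using Dd unfolding z_def by auto
  qed simp
  have S0c': "\<And>s. s \<in> S0 \<Longrightarrow> s \<in> carrier G \<and> s \<in> H \<and> s \<noteq> \<one>" using S0H S0c by auto
  have S0K: "\<And>x. x \<in> subset_sums G S0 \<Longrightarrow> x \<in> K" using R1 Keq by auto
  have sq: "s \<otimes> s = z" if s: "s \<in> S0" for s
  proof -
    have sc: "s \<in> carrier G" "s \<in> H" "s \<noteq> \<one>" using S0c' s by auto
    define w where "w = inv s \<otimes> z"
    have wc: "w \<in> carrier G" "w \<in> H" unfolding w_def using sc zc Hm Hinv by auto
    have sw: "s \<otimes> w = z" unfolding w_def using sc zc by (simp add: m_assoc[symmetric])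
    have "w \<noteq> z"
    proof
      assume "w = z"
      then have "inv s = \<one>" using zc sc unfolding w_def by simp
      then show False using sc by (metis inv_inv one_closed inv_one)
    qed
    then have "w \<in> K" using Hz wc by blast
    moreover have "w \<noteq> \<one>"
    proof
      assume "w = \<one>"
      then have "z = s" using sw sc by simp
      then show False using zK sc s K1 by auto
    qed
    ultimately have wS: "w \<in> S0" using Keq by auto
    show ?thesis
    proof (cases "w = s")
      case True then show ?thesis using sw by simp
    next
      case False
      then have "s \<otimes> w \<in> subset_sums G S0" using sums_list2[OF s wS _ S0c] by auto
      then show ?thesis using sw zK S0K by auto
    qed
  qed
  have cm: "u \<otimes> s = s \<otimes> u" if s: "s \<in> S0" for s
  proof (rule ccontr)
    assume ne: "u \<otimes> s \<noteq> s \<otimes> u"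
    have sc: "s \<in> carrier G" "s \<in> H" "s \<noteq> \<one>" using S0c' s by auto
    define t where "t = inv u \<otimes> s \<otimes> u"
    have tK: "t \<in> K" unfolding t_def using conjK[OF uY(1)] s K1 by auto
    have tc: "t \<in> carrier G" "t \<in> H" using tK Kc KH by auto
    have ut: "u \<otimes> t = s \<otimes> u" unfolding t_def using uc sc by (simp add: m_assoc[symmetric])
    have "t \<noteq> \<one>"
    proof
      assume "t = \<one>" then have "s \<otimes> u = u" using ut uc by simp
      then show False using sc uc by simp
    qed
    then have tS: "t \<in> S0" using tK Keq by auto
    have ts: "t \<noteq> s" using ut ne by auto
    have Ssub: "S0 \<subseteq> S" "Y \<subseteq> S" using S_split by auto
    have "s \<otimes> (u \<otimes> (t \<otimes> v)) \<in> subset_sums G S"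
      apply (rule sums_list4)
      using s tS uY Ssub ts sc tc uc Sc uv(2) by auto
    moreover have "s \<otimes> (u \<otimes> (t \<otimes> v)) = g"
    proof -
      have "s \<otimes> (u \<otimes> (t \<otimes> v)) = s \<otimes> ((u \<otimes> t) \<otimes> v)" using uc tc sc by (simp add: m_assoc)
      also have "\<dots> = (s \<otimes> s) \<otimes> (u \<otimes> v)" using ut uc tc sc by (simp add: m_assoc)
      also have "\<dots> = g" using sq[OF s] zd by simp
      finally show ?thesis .
    qed
    ultimately show False using gn by simp
  qed
  have inv2: "t = inv s" if st: "s \<in> S0" "t \<in> S0" "t \<noteq> s" for s t
  proof (rule ccontr)
    assume nt: "t \<noteq> inv s"
    have sc: "s \<in> carrier G" "s \<noteq> \<one>" "t \<in> carrier G" "t \<noteq> \<one>" using S0c' st by auto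
    define w where "w = s \<otimes> t"
    have wc: "w \<in> carrier G" unfolding w_def using sc by auto
    have "w \<in> subset_sums G S0" unfolding w_def using sums_list2[OF st(1,2) _ S0c] st by auto
    then have "w \<in> K" using S0K by auto
    moreover have "w \<noteq> \<one>" unfolding w_def using nt sc mult_eq_one by auto
    ultimately have wS: "w \<in> S0" using Keq by auto
    have ws: "w \<noteq> s" "w \<noteq> t" unfolding w_def using sc by auto
    have "s \<otimes> (t \<otimes> w) \<in> subset_sums G S0"
      using sums_list3[OF st(1,2) wS _ _ _ S0c] st ws by auto
    moreover have "s \<otimes> (t \<otimes> w) = z" using sq[OF wS] sc unfolding w_def by (simp add: m_assoc)
    ultimately show False using zK S0K by auto
  qed
  have "S0 \<noteq> {}" using ab cY m4 by auto
  then obtain s0 where s0: "s0 \<in> S0" by blast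
  have s0c: "s0 \<in> carrier G" using S0c s0 by auto
  let ?T = "{\<one>, s0, inv s0, s0 \<otimes> s0}"
  have HT: "h \<in> ?T" if "h \<in> H" for h
  proof -
    have "h \<in> K \<or> h = z" using Hz that by blast
    then show ?thesis using Keq inv2[OF s0] sq[OF s0] by auto
  qed
  have Tc: "?T \<subseteq> carrier G" using s0c by auto
  have ucomm: "u \<otimes> h = h \<otimes> u" if "h \<in> H" for h
    using pow_comm[OF uc(1) s0c cm[OF s0] HT[OF that]] .
  have hcomm: "h \<otimes> k = k \<otimes> h" if "h \<in> H" "k \<in> H" for h k
  proof -
    have hc: "h \<in> carrier G" using that Hsub by auto
    have "s0 \<otimes> h = h \<otimes> s0" using pow_comm[OF s0c s0c _ HT[OF that(1)]] by simp
    then show ?thesis using pow_comm[OF hc s0c _ HT[OF that(2)]] by simp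
  qed
  have "comm_group G" using abelian_crit[OF uc(1) uc(3) ucomm hcomm] by blast
  then show False using nab by simp
qed

end


context bad
begin

lemma caseA0: assumes a0: "card S0 = 0" shows False
proof -
  have S0e: "S0 = {}" using a0 finS0 by simp
  have Ke: "K = {\<one>}" using Keq S0e by simp
  have cY: "card Y = card H" using ab a0 by simp
  have Yeq: "Y = carrier G - H"
  proof (rule card_subset_eq)
    show "finite (carrier G - H)" using fin by simp
    show "Y \<subseteq> carrier G - H" using Yc by auto
    show "card Y = card (carrier G - H)" using cY card_out by simp
  qed
  obtain u0 where u0: "u0 \<in> Y" using Y_ne by blast
  have u0c: "u0 \<in> carrier G" "u0 \<notin> H" using u0 Yc by auto
  define c where "c = u0 \<otimes> u0"
  have cH: "c \<in> H" "c \<in> carrier G" unfolding c_def using out_out u0c by auto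
  have DHx: "D = H - {x \<otimes> x}" if x: "x \<in> Y" for x
  proof -
    have xc: "x \<in> carrier G" "x \<notin> H" using x Yc by auto
    have xxH: "x \<otimes> x \<in> H" using out_out xc by auto
    have "x \<otimes> x \<notin> D"
    proof
      assume "x \<otimes> x \<in> D"
      then obtain v where "v \<in> Y - {x}" "x \<otimes> x = x \<otimes> v" using Dl(1)[OF x] by auto
      then show False using xc Yc by auto
    qed
    then have sub: "D \<subseteq> H - {x \<otimes> x}" using DH by auto
    have "card D = card (H - {x \<otimes> x})" using Dl(2)[OF x] cY xxH finH by simp
    then show ?thesis using card_subset_eq[OF _ sub] finH by simp
  qed
  have sqc: "x \<otimes> x = c" if x: "x \<in> Y" for x
  proof (rule ccontr)
    assume ne: "x \<otimes> x \<noteq> c"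
    have xc: "x \<in> carrier G" "x \<notin> H" using x Yc by auto
    have "x \<otimes> x \<in> H" using out_out xc by auto
    then have "x \<otimes> x \<in> D" using DHx[OF u0] ne unfolding c_def by auto
    then show False using DHx[OF x] by auto
  qed
  have gcq: "g = c"
  proof (rule ccontr)
    assume "g \<noteq> c"
    then have "g \<in> D" using DHx[OF u0] gH unfolding c_def by auto
    then show False using KD[of \<one> g] Ke gc by auto
  qed
  have KI: "h \<otimes> u0 = u0 \<otimes> inv h" if h: "h \<in> H" for h
  proof -
    have hc: "h \<in> carrier G" using h Hsub by auto
    have "u0 \<otimes> h \<in> Y" using Yeq in_out(2)[OF h u0c] hc u0c by auto
    then have "(u0 \<otimes> h) \<otimes> (u0 \<otimes> h) = u0 \<otimes> u0" using sqc c_def by auto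
    then have "u0 \<otimes> (h \<otimes> u0 \<otimes> h) = u0 \<otimes> u0" using hc u0c by (simp add: m_assoc)
    then have "h \<otimes> u0 \<otimes> h = u0" using hc u0c by simp
    then have "h \<otimes> u0 \<otimes> h \<otimes> inv h = u0 \<otimes> inv h" by simp
    then show ?thesis using hc u0c by (simp add: m_assoc)
  qed
  have Hab: "h \<otimes> k = k \<otimes> h" if "h \<in> H" "k \<in> H" for h k
  proof -
    have hc: "h \<in> carrier G" "k \<in> carrier G" using that Hsub by auto
    have hk: "h \<otimes> k \<in> H" using that Hm by auto
    have "(h \<otimes> k) \<otimes> u0 = u0 \<otimes> (inv k \<otimes> inv h)" using KI[OF hk] hc by (simp add: inv_mult_group)
    moreover have "(h \<otimes> k) \<otimes> u0 = u0 \<otimes> (inv h \<otimes> inv k)"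
    proof -
      have "(h \<otimes> k) \<otimes> u0 = h \<otimes> (k \<otimes> u0)" using hc u0c by (simp add: m_assoc)
      also have "\<dots> = h \<otimes> (u0 \<otimes> inv k)" using KI[OF that(2)] by simp
      also have "\<dots> = (h \<otimes> u0) \<otimes> inv k" using hc u0c by (simp add: m_assoc)
      also have "\<dots> = (u0 \<otimes> inv h) \<otimes> inv k" using KI[OF that(1)] by simp
      also have "\<dots> = u0 \<otimes> (inv h \<otimes> inv k)" using hc u0c by (simp add: m_assoc)
      finally show ?thesis .
    qed
    ultimately have "inv k \<otimes> inv h = inv h \<otimes> inv k" using hc u0c by simp
    then have "inv (h \<otimes> k) = inv (k \<otimes> h)" using hc by (simp add: inv_mult_group)
    then have "inv (inv (h \<otimes> k)) = inv (inv (k \<otimes> h))" by simp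
    then show ?thesis using hc by simp
  qed
  have cc: "c \<otimes> c = \<one>"
  proof -
    have "c \<otimes> u0 = u0 \<otimes> c" unfolding c_def using u0c by (simp add: m_assoc)
    then have "u0 \<otimes> c = u0 \<otimes> inv c" using KI[OF cH(1)] by simp
    then have "c = inv c" using u0c cH by simp
    then have "c \<otimes> c = c \<otimes> inv c" by simp
    then show ?thesis using cH by simp
  qed
  have cinv: "inv c = c" using mult_eq_one[OF cH(2) cH(2)] cc by simp
  obtain h where h: "h \<in> H" "h \<otimes> h \<noteq> \<one>"
  proof (rule ccontr)
    assume "\<not> thesis"
    then have all: "\<And>h. h \<in> H \<Longrightarrow> h \<otimes> h = \<one>" using that by blast
    have "u0 \<otimes> h = h \<otimes> u0" if "h \<in> H" for h
    proof -
      have hc: "h \<in> carrier G" using that Hsub by auto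
      have "inv h = h" using all[OF that] mult_eq_one[OF hc hc] by simp
      then show ?thesis using KI[OF that] by simp
    qed
    then have "comm_group G" using abelian_crit[OF u0c _ Hab] by blast
    then show False using nab by simp
  qed
  have hc: "h \<in> carrier G" "h \<noteq> \<one>" "h \<noteq> c" using h Hsub cc by auto
  define F where "F = (\<lambda>x. {\<one>, x, c \<otimes> x, c \<otimes> (x \<otimes> x)})"
  have finF: "finite (F x)" for x unfolding F_def by simp
  obtain x where x: "x \<in> H" "x \<noteq> \<one>" "x \<noteq> c" "card (F x) < card H"
  proof (cases "5 \<le> card H")
    case True
    have "card (F h) \<le> 4" unfolding F_def using card_length[of "[\<one>, h, c \<otimes> h, c \<otimes> (h \<otimes> h)]"] by simp
    then show ?thesis using that[of h] h hc True by linarith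
  next
    case False
    then have c4: "card H = 4" using m4 by simp
    show ?thesis
    proof (cases "c = \<one>")
      case True
      have "F h = {\<one>, h, h \<otimes> h}" unfolding F_def using True hc by auto
      then have "card (F h) \<le> 3" using card_length[of "[\<one>, h, h \<otimes> h]"] by simp
      then show ?thesis using that[of h] h hc c4 by linarith
    next
      case cn: False
      show ?thesis
      proof (cases "\<exists>x\<in>H. x \<otimes> x = c")
        case True
        then obtain x where x: "x \<in> H" "x \<otimes> x = c" by blast
        have xc: "x \<in> carrier G" using x Hsub by auto
        have "x \<noteq> \<one>" using x cn by auto
        moreover have "x \<noteq> c" using x cc cn by auto
        moreover have "F x = {\<one>, x, c \<otimes> x}" unfolding F_def using x cc by auto
        then have "card (F x) \<le> 3" using card_length[of "[\<one>, x, c \<otimes> x]"] by simp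
        ultimately show ?thesis using that[of x] x c4 by linarith
      next
        case False
        have d: "h \<otimes> h \<noteq> c" using False h by auto
        have sub: "{\<one>, c, h, h \<otimes> h} \<subseteq> H" using h cH Hm by auto
        have "card {\<one>, c, h, h \<otimes> h} = 4" using cn hc h d by auto
        then have Heq: "{\<one>, c, h, h \<otimes> h} = H" using card_subset_eq[OF finH sub] c4 by simp
        have "c \<otimes> h \<in> H" using cH h Hm by auto
        then have "c \<otimes> h \<in> {\<one>, c, h, h \<otimes> h}" using Heq by simp
        moreover have "c \<otimes> h \<noteq> \<one>" using mult_eq_one[OF cH(2) hc(1)] cinv hc by simp
        moreover have "c \<otimes> h \<noteq> c" using hc cH by simp
        moreover have "c \<otimes> h \<noteq> h" using hc cH cn by simp
        moreover have "c \<otimes> h \<noteq> h \<otimes> h" using hc cH by simp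
        ultimately show ?thesis by auto
      qed
    qed
  qed
  obtain y where y: "y \<in> H" "y \<notin> F x" using avoid[OF finH finF x(4)] by blast
  have xc: "x \<in> carrier G" "y \<in> carrier G" using x y Hsub by auto
  define w where "w = c \<otimes> y \<otimes> inv x"
  have wH: "w \<in> H" "w \<in> carrier G" unfolding w_def using x y cH Hm Hinv Hsub by auto
  have y1: "y \<noteq> \<one>" "y \<noteq> x" "y \<noteq> c \<otimes> x" "y \<noteq> c \<otimes> (x \<otimes> x)" using y unfolding F_def by auto
  have w1: "w \<noteq> \<one>"
  proof
    assume "w = \<one>"
    then have "c \<otimes> y \<otimes> inv x \<otimes> x = \<one> \<otimes> x" unfolding w_def by simp
    then have "c \<otimes> y = x" using xc cH by (simp add: m_assoc)
    then have "c \<otimes> (c \<otimes> y) = c \<otimes> x" by simp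
    then have "y = c \<otimes> x" using cc xc cH by (simp add: m_assoc[symmetric])
    then show False using y1 by simp
  qed
  have w2: "w \<noteq> x"
  proof
    assume "w = x"
    then have "c \<otimes> y \<otimes> inv x \<otimes> x = x \<otimes> x" unfolding w_def by simp
    then have "c \<otimes> y = x \<otimes> x" using xc cH by (simp add: m_assoc)
    then have "c \<otimes> (c \<otimes> y) = c \<otimes> (x \<otimes> x)" by simp
    then have "y = c \<otimes> (x \<otimes> x)" using cc xc cH by (simp add: m_assoc[symmetric])
    then show False using y1 by simp
  qed
  have w3: "w \<noteq> y"
  proof
    assume "w = y"
    have "w = y \<otimes> (c \<otimes> inv x)" unfolding w_def using Hab[OF cH(1) y(1)] xc cH by (simp add: m_assoc)
    then have "y \<otimes> (c \<otimes> inv x) = y \<otimes> \<one>" using \<open>w = y\<close> xc by simp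
    then have "c \<otimes> inv x = \<one>" using xc cH by simp
    then have "inv x = c" using mult_eq_one[OF cH(2) inv_closed[OF xc(1)]] cinv by simp
    then have "inv (inv x) = inv c" by simp
    then have "x = c" using xc cinv by simp
    then show False using x by simp
  qed
  have pair: "(u0 \<otimes> h1) \<otimes> (u0 \<otimes> h2) = c \<otimes> (inv h1 \<otimes> h2)" if "h1 \<in> H" "h2 \<in> H" for h1 h2
  proof -
    have hc: "h1 \<in> carrier G" "h2 \<in> carrier G" using that Hsub by auto
    have "(u0 \<otimes> h1) \<otimes> (u0 \<otimes> h2) = u0 \<otimes> ((h1 \<otimes> u0) \<otimes> h2)" using hc u0c by (simp add: m_assoc)
    also have "\<dots> = u0 \<otimes> ((u0 \<otimes> inv h1) \<otimes> h2)" using KI[OF that(1)] by simp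
    also have "\<dots> = c \<otimes> (inv h1 \<otimes> h2)" unfolding c_def using hc u0c by (simp add: m_assoc)
    finally show ?thesis .
  qed
  have iyw: "inv y \<otimes> w = c \<otimes> inv x"
  proof -
    have "inv y \<otimes> w = (inv y \<otimes> (c \<otimes> y)) \<otimes> inv x" unfolding w_def using xc cH by (simp add: m_assoc)
    also have "\<dots> = (inv y \<otimes> (y \<otimes> c)) \<otimes> inv x" using Hab[OF cH(1) y(1)] by simp
    also have "\<dots> = c \<otimes> inv x" using xc cH lc1 by simp
    finally show ?thesis .
  qed
  have prod: "u0 \<otimes> ((u0 \<otimes> x) \<otimes> ((u0 \<otimes> y) \<otimes> (u0 \<otimes> w))) = g"
  proof -
    have "u0 \<otimes> ((u0 \<otimes> x) \<otimes> ((u0 \<otimes> y) \<otimes> (u0 \<otimes> w))) = (u0 \<otimes> (u0 \<otimes> x)) \<otimes> ((u0 \<otimes> y) \<otimes> (u0 \<otimes> w))"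
      using u0c xc wH by (simp add: m_assoc)
    also have "\<dots> = (c \<otimes> x) \<otimes> (c \<otimes> (c \<otimes> inv x))" unfolding c_def
      using pair[OF y(1) wH(1)] iyw u0c xc by (simp add: m_assoc c_def)
    also have "\<dots> = (c \<otimes> x) \<otimes> ((c \<otimes> c) \<otimes> inv x)" using cH xc by (simp add: m_assoc)
    also have "\<dots> = c" using cc cH xc by (simp add: m_assoc)
    finally show ?thesis using gcq by simp
  qed
  have inY: "u0 \<otimes> k \<in> Y" if "k \<in> H" for k
    using in_out(2)[OF that u0c] Yeq u0c that Hsub by auto
  have "u0 \<otimes> ((u0 \<otimes> x) \<otimes> ((u0 \<otimes> y) \<otimes> (u0 \<otimes> w))) \<in> subset_sums G S"
    apply (rule sums_list4)
    using u0 inY[OF x(1)] inY[OF y(1)] inY[OF wH(1)] S_split Sc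
      x(2) y1 w1 w2 w3 u0c xc wH
    by (auto simp: subset_iff)
  then show False using prod gn by simp
qed

end


context bad
begin

lemma caseB3: assumes b3: "3 \<le> card Y" and a1: "1 \<le> card S0" shows False
proof -
  define N where "N = {n \<in> carrier G. \<forall>y\<in>Y. n \<otimes> y \<in> Y}"
  obtain u0 where u0: "u0 \<in> Y" using Y_ne by blast
  have u0c: "u0 \<in> carrier G" "u0 \<notin> H" using u0 Yc by auto
  have Yc': "\<And>y. y \<in> Y \<Longrightarrow> y \<in> carrier G" using Yc by auto
  have cD: "card D = card Y - 1" using Dl(2)[OF u0] .
  have L1: "inv x \<otimes> d \<in> Y" if dx: "d \<in> D" "x \<in> Y" for d x
  proof -
    obtain v where v: "v \<in> Y - {x}" "d = x \<otimes> v" using Dl(1)[OF dx(2)] dx(1) by auto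
    then show ?thesis using Yc' dx(2) by (simp add: lc1)
  qed
  have L1': "d \<otimes> inv x \<in> Y" if dx: "d \<in> D" "x \<in> Y" for d x
  proof -
    obtain v where v: "v \<in> Y - {x}" "d = v \<otimes> x" using Dr[OF dx(2)] dx(1) by auto
    then show ?thesis using Yc' dx(2) by (simp add: m_assoc)
  qed
  have L2: "\<exists>x\<in>Y. y = inv x \<otimes> d" if "d \<in> D" "y \<in> Y" for d y
  proof -
    have dc: "d \<in> carrier G" using that Dc by auto
    have sub: "(\<lambda>x. inv x \<otimes> d) ` Y \<subseteq> Y" using L1 that(1) by auto
    have inj: "inj_on (\<lambda>x. inv x \<otimes> d) Y"
    proof (rule inj_onI)
      fix a b assume "a \<in> Y" "b \<in> Y" "inv a \<otimes> d = inv b \<otimes> d"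
      then have "inv a = inv b" using dc Yc' by simp
      then have "inv (inv a) = inv (inv b)" by simp
      then show "a = b" using \<open>a \<in> Y\<close> \<open>b \<in> Y\<close> Yc' by simp
    qed
    have "(\<lambda>x. inv x \<otimes> d) ` Y = Y" using card_subset_eq[OF finY sub] card_image[OF inj] by simp
    then show ?thesis using that(2) by auto
  qed
  have L2': "\<exists>x\<in>Y. y = d \<otimes> inv x" if "d \<in> D" "y \<in> Y" for d y
  proof -
    have dc: "d \<in> carrier G" using that Dc by auto
    have sub: "(\<lambda>x. d \<otimes> inv x) ` Y \<subseteq> Y" using L1' that(1) by auto
    have inj: "inj_on (\<lambda>x. d \<otimes> inv x) Y"
    proof (rule inj_onI)
      fix a b assume "a \<in> Y" "b \<in> Y" "d \<otimes> inv a = d \<otimes> inv b"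
      then have "inv a = inv b" using dc Yc' by simp
      then have "inv (inv a) = inv (inv b)" by simp
      then show "a = b" using \<open>a \<in> Y\<close> \<open>b \<in> Y\<close> Yc' by simp
    qed
    have "(\<lambda>x. d \<otimes> inv x) ` Y = Y" using card_subset_eq[OF finY sub] card_image[OF inj] by simp
    then show ?thesis using that(2) by auto
  qed
  have Nc: "n \<in> carrier G" if "n \<in> N" for n using that unfolding N_def by auto
  have NY: "n \<otimes> y \<in> Y" if "n \<in> N" "y \<in> Y" for n y using that unfolding N_def by auto
  have N1: "\<one> \<in> N" unfolding N_def using Yc' by auto
  have Nm: "n1 \<otimes> n2 \<in> N" if "n1 \<in> N" "n2 \<in> N" for n1 n2
    unfolding N_def using that Nc NY Yc' by (auto simp: m_assoc)
  have NimY: "(\<lambda>y. n \<otimes> y) ` Y = Y" if n: "n \<in> N" for n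
  proof -
    have sub: "(\<lambda>y. n \<otimes> y) ` Y \<subseteq> Y" using NY n by auto
    have inj: "inj_on (\<lambda>y. n \<otimes> y) Y" using Nc[OF n] Yc' by (intro inj_onI) simp
    show ?thesis using card_subset_eq[OF finY sub] card_image[OF inj] by simp
  qed
  have Ninv: "inv n \<in> N" if n: "n \<in> N" for n
  proof -
    have "inv n \<otimes> y \<in> Y" if y: "y \<in> Y" for y
    proof -
      obtain y' where "y' \<in> Y" "y = n \<otimes> y'" using NimY[OF n] y by blast
      then show ?thesis using Nc[OF n] Yc' by (simp add: lc1)
    qed
    then show ?thesis unfolding N_def using Nc[OF n] by auto
  qed
  have NH: "N \<subseteq> H"
  proof
    fix n assume n: "n \<in> N"
    have "n \<otimes> u0 \<in> Y" using NY[OF n u0] .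
    then have "(n \<otimes> u0) \<otimes> inv u0 \<in> H" using out_out Yc Hinv_iff u0c by auto
    then show "n \<in> H" using Nc[OF n] u0c by (simp add: m_assoc)
  qed
  have finN: "finite N" using finite_subset[OF NH finH] .
  have DN: "d1 \<otimes> inv d2 \<in> N" if "d1 \<in> D" "d2 \<in> D" for d1 d2
  proof -
    have dc: "d1 \<in> carrier G" "d2 \<in> carrier G" using that Dc by auto
    have "d1 \<otimes> inv d2 \<otimes> y \<in> Y" if y: "y \<in> Y" for y
    proof -
      obtain x where x: "x \<in> Y" "y = d2 \<otimes> inv x" using L2'[OF \<open>d2 \<in> D\<close> y] by blast
      have "d1 \<otimes> inv d2 \<otimes> y = d1 \<otimes> inv x" using x dc Yc' by (simp add: m_assoc lc1)
      then show ?thesis using L1'[OF \<open>d1 \<in> D\<close> x(1)] by simp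
    qed
    then show ?thesis unfolding N_def using dc by auto
  qed
  have Dne: "D \<noteq> {}" using cD b3 by auto
  then obtain d0 where d0: "d0 \<in> D" by blast
  have d0c: "d0 \<in> carrier G" using d0 Dc by auto
  have cardN1: "card Y - 1 \<le> card N"
  proof -
    have sub: "(\<lambda>d. d \<otimes> inv d0) ` D \<subseteq> N" using DN d0 by auto
    have inj: "inj_on (\<lambda>d. d \<otimes> inv d0) D" using d0c Dc by (intro inj_onI) (auto simp: subset_iff)
    show ?thesis using card_mono[OF finN sub] card_image[OF inj] cD by simp
  qed
  have NyY: "(\<lambda>n. n \<otimes> y) ` N \<subseteq> Y" "card ((\<lambda>n. n \<otimes> y) ` N) = card N" if y: "y \<in> Y" for y
  proof -
    show "(\<lambda>n. n \<otimes> y) ` N \<subseteq> Y" using NY y by auto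
    have "inj_on (\<lambda>n. n \<otimes> y) N" using Nc Yc' y by (intro inj_onI) auto
    then show "card ((\<lambda>n. n \<otimes> y) ` N) = card N" by (rule card_image)
  qed
  have cardN2: "card N \<le> card Y" using card_mono[OF finY NyY(1)[OF u0]] NyY(2)[OF u0] by simp
  have cardN: "card N = card Y"
  proof (rule ccontr)
    assume "card N \<noteq> card Y"
    then have cN: "card N = card Y - 1" using cardN1 cardN2 by linarith
    let ?A = "(\<lambda>n. n \<otimes> u0) ` N"
    have "card ?A < card Y" using NyY(2)[OF u0] cN b3 by simp
    then obtain y1 where y1: "y1 \<in> Y" "y1 \<notin> ?A" using avoid[OF finY] finN by blast
    let ?B = "(\<lambda>n. n \<otimes> y1) ` N"
    have disj: "?A \<inter> ?B = {}"
    proof (rule ccontr)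
      assume "?A \<inter> ?B \<noteq> {}"
      then obtain n1 n2 where nn: "n1 \<in> N" "n2 \<in> N" "n2 \<otimes> u0 = n1 \<otimes> y1" by blast
      have "y1 = (inv n1 \<otimes> n2) \<otimes> u0"
        using nn Nc Yc' y1 u0c by (simp add: m_assoc lc1)
      moreover have "inv n1 \<otimes> n2 \<in> N" using Nm Ninv nn by auto
      ultimately show False using y1 by blast
    qed
    have "card (?A \<union> ?B) = card N + card N"
      using card_Un_disjoint[OF _ _ disj] finN NyY(2)[OF u0] NyY(2)[OF y1(1)] by simp
    moreover have "card (?A \<union> ?B) \<le> card Y"
      using card_mono[OF finY] NyY(1)[OF u0] NyY(1)[OF y1(1)] by simp
    ultimately show False using cN b3 by linarith
  qed
  have NYeq: "(\<lambda>n. n \<otimes> y) ` N = Y" if y: "y \<in> Y" for y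
    using card_subset_eq[OF finY NyY(1)[OF y]] NyY(2)[OF y] cardN by simp
  let ?Nd = "(\<lambda>n. n \<otimes> d0) ` N"
  have YY: "x \<otimes> y \<in> ?Nd" if xy: "x \<in> Y" "y \<in> Y" for x y
  proof -
    obtain x' where x': "x' \<in> Y" "y = inv x' \<otimes> d0" using L2[OF d0 xy(2)] by blast
    obtain n1 where n1: "n1 \<in> N" "x = n1 \<otimes> u0" using NYeq[OF u0] xy(1) by blast
    obtain n2 where n2: "n2 \<in> N" "x' = n2 \<otimes> u0" using NYeq[OF u0] x'(1) by blast
    have c: "n1 \<in> carrier G" "n2 \<in> carrier G" using n1 n2 Nc by auto
    have "x \<otimes> y = (n1 \<otimes> inv n2) \<otimes> d0"
    proof -
      have "x \<otimes> y = n1 \<otimes> (u0 \<otimes> (inv u0 \<otimes> (inv n2 \<otimes> d0)))"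
        using x' n1 n2 c u0c d0c by (simp add: m_assoc inv_mult_group)
      also have "\<dots> = (n1 \<otimes> inv n2) \<otimes> d0" using c u0c d0c by (simp add: lc2 m_assoc)
      finally show ?thesis .
    qed
    moreover have "n1 \<otimes> inv n2 \<in> N" using Nm Ninv n1 n2 by auto
    ultimately show ?thesis by blast
  qed
  have cardNd: "card ?Nd = card Y"
  proof -
    have "inj_on (\<lambda>n. n \<otimes> d0) N" using Nc d0c by (intro inj_onI) auto
    then show ?thesis using card_image[of "\<lambda>n. n \<otimes> d0" N] cardN by simp
  qed
  have finNd: "finite ?Nd" using finN by simp
  have sqD: "x \<otimes> x \<notin> D" if x: "x \<in> Y" for x
  proof
    assume "x \<otimes> x \<in> D"
    then obtain v where "v \<in> Y - {x}" "x \<otimes> x = x \<otimes> v" using Dl(1)[OF x] by auto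
    then show False using x Yc' by auto
  qed
  define c where "c = u0 \<otimes> u0"
  have cc: "c \<in> carrier G" "c \<in> H" unfolding c_def using u0c out_out by auto
  have DY: "D \<subseteq> ?Nd" unfolding D_def using YY by auto
  have sq: "x \<otimes> x = c" if x: "x \<in> Y" for x
  proof (rule ccontr)
    assume ne: "x \<otimes> x \<noteq> c"
    have sub: "insert (x \<otimes> x) (insert c D) \<subseteq> ?Nd" using DY YY x u0 unfolding c_def by auto
    have "card (insert (x \<otimes> x) (insert c D)) = card D + 2"
      using ne sqD[OF x] sqD[OF u0] finD unfolding c_def by simp
    then show False using card_mono[OF finNd sub] cardNd cD b3 by linarith
  qed
  have Ndeq: "?Nd = insert c D"
  proof -
    have sub: "insert c D \<subseteq> ?Nd" using DY YY u0 unfolding c_def by auto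
    have "card (insert c D) = card Y" using sqD[OF u0] finD cD b3 unfolding c_def by simp
    then show ?thesis using card_subset_eq[OF finNd sub] cardNd by simp
  qed
  have cD': "c \<notin> D" using sqD[OF u0] unfolding c_def .
  have "c \<in> ?Nd" using Ndeq by simp
  then obtain n0 where n0: "n0 \<in> N" "c = n0 \<otimes> d0" by blast
  have n0c: "n0 \<in> carrier G" using n0 Nc by auto
  have D1: "n \<otimes> c \<in> D" if "n \<in> N" "n \<noteq> \<one>" for n
  proof -
    have nc: "n \<in> carrier G" using that Nc by auto
    have "n \<otimes> c = (n \<otimes> n0) \<otimes> d0" using n0 nc n0c d0c by (simp add: m_assoc)
    moreover have "n \<otimes> n0 \<in> N" using Nm that n0 by auto
    ultimately have "n \<otimes> c \<in> insert c D" using Ndeq by auto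
    moreover have "n \<otimes> c \<noteq> c" using nc cc that by simp
    ultimately show ?thesis by auto
  qed
  have D2: "\<exists>n\<in>N. n \<noteq> \<one> \<and> d = n \<otimes> c" if d: "d \<in> D" for d
  proof -
    have "d \<in> ?Nd" using Ndeq d by auto
    then obtain n' where n': "n' \<in> N" "d = n' \<otimes> d0" by blast
    have n'c: "n' \<in> carrier G" using n' Nc by auto
    have "d = (n' \<otimes> inv n0) \<otimes> c" using n' n0 n'c n0c d0c by (simp add: m_assoc lc1)
    moreover have "n' \<otimes> inv n0 \<in> N" using Nm Ninv n' n0 by auto
    moreover have "n' \<otimes> inv n0 \<noteq> \<one>"
    proof
      assume "n' \<otimes> inv n0 = \<one>"
      then have "d = c" using \<open>d = (n' \<otimes> inv n0) \<otimes> c\<close> cc by simp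
      then show False using cD' d by simp
    qed
    ultimately show ?thesis by blast
  qed
  define g' where "g' = g \<otimes> inv c"
  have g'c: "g' \<in> carrier G" "g' \<in> H" unfolding g'_def using gc cc gH Hm Hinv by auto
  have TK': "\<exists>n\<in>N. n \<noteq> \<one> \<and> h = g' \<otimes> inv n" if hh: "h \<in> H" "h \<notin> K" for h
  proof -
    obtain d where d: "d \<in> D" "h = g \<otimes> inv d" using TK[OF hh] by blast
    obtain n where n: "n \<in> N" "n \<noteq> \<one>" "d = n \<otimes> c" using D2[OF d(1)] by blast
    have nc: "n \<in> carrier G" using n Nc by auto
    have "h = g' \<otimes> inv n" using d n nc cc gc unfolding g'_def by (simp add: inv_mult_group m_assoc)
    then show ?thesis using n by blast
  qed
  have EX': "k \<noteq> g' \<otimes> inv n" if "k \<in> K" "n \<in> N" "n \<noteq> \<one>" for k n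
  proof
    assume k: "k = g' \<otimes> inv n"
    have nc: "n \<in> carrier G" using that Nc by auto
    have "k \<otimes> (n \<otimes> c) = g" using k nc cc gc unfolding g'_def by (simp add: m_assoc lc1)
    then show False using KD[OF that(1) D1[OF that(2,3)]] by simp
  qed
  have S0K: "\<And>x. x \<in> subset_sums G S0 \<Longrightarrow> x \<in> K" using R1 Keq by auto
  have three: "\<exists>n\<in>N. n \<notin> B" if "finite B" "card B < 3" for B
    using avoid[OF finN that(1)] that(2) cardN b3 by linarith
  show False
  proof (cases "g' \<in> N")
    case False
    obtain t where t: "t \<in> N" "t \<notin> {\<one>}" using three[of "{\<one>}"] by auto
    have tc: "t \<in> carrier G" "t \<in> H" using t Nc NH by auto
    have tK: "t \<in> K"
    proof (rule ccontr)
      assume "t \<notin> K"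
      then obtain n where n: "n \<in> N" "t = g' \<otimes> inv n" using TK'[OF tc(2)] by blast
      have "g' = t \<otimes> n" using n Nc g'c by (simp add: m_assoc)
      moreover have "t \<otimes> n \<in> N" using Nm t(1) n(1) by blast
      ultimately show False using False by simp
    qed
    have g'K: "g' \<in> K"
    proof (rule ccontr)
      assume "g' \<notin> K"
      then obtain n where n: "n \<in> N" "n \<noteq> \<one>" "g' = g' \<otimes> inv n" using TK'[OF g'c(2)] by blast
      then have "inv n = \<one>" using g'c Nc by simp
      then have "inv (inv n) = \<one>" by simp
      then show False using n Nc by simp
    qed
    have tS: "t \<in> S0" using tK t Keq by auto
    have g'1: "g' \<noteq> \<one>" using False N1 by auto
    have g'S: "g' \<in> S0" using g'K g'1 Keq by auto
    have "g' \<noteq> t" using False t by auto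
    then have "g' \<otimes> t \<in> K" using sums_list2[OF g'S tS _ S0c] S0K by auto
    moreover have "inv t \<in> N" "inv t \<noteq> \<one>" using Ninv t tc by auto
    ultimately show False using EX'[of "g' \<otimes> t" "inv t"] tc by simp
  next
    case True
    have g'1: "g' = \<one>"
    proof (rule ccontr)
      assume "g' \<noteq> \<one>"
      then show False using EX'[of \<one> g'] True K1 g'c by auto
    qed
    have EXs: "k \<noteq> inv n" if "k \<in> K" "n \<in> N" "n \<noteq> \<one>" for k n
      using EX'[OF that] g'1 that Nc by simp
    have TKs: "h \<in> N" if hh: "h \<in> H" "h \<notin> K" for h
    proof -
      obtain n where "n \<in> N" "h = g' \<otimes> inv n" using TK'[OF hh] by blast
      then show ?thesis using g'1 Ninv Nc by simp
    qed
    have "S0 \<noteq> {}" using a1 by auto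
    then obtain s where s: "s \<in> S0" by blast
    have sc: "s \<in> carrier G" "s \<in> H" "s \<noteq> \<one>" using s S0c S0H by auto
    have sK: "s \<in> K" using s K1 by auto
    have sN: "s \<notin> N"
    proof
      assume "s \<in> N"
      then have i: "inv s \<in> N" "inv s \<noteq> \<one>" using Ninv sc by auto
      have "s \<noteq> inv (inv s)" using EXs[OF sK i] .
      then show False using sc by simp
    qed
    have "card {\<one>, s \<otimes> s} < 3" using card_length[of "[\<one>, s \<otimes> s]"] by simp
    then obtain n where n: "n \<in> N" "n \<notin> {\<one>, s \<otimes> s}" using three[of "{\<one>, s \<otimes> s}"] by blast
    have nc: "n \<in> carrier G" "n \<in> H" using n Nc NH by auto
    define t where "t = inv s \<otimes> n"
    have tc: "t \<in> carrier G" "t \<in> H" unfolding t_def using sc nc Hm Hinv by auto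
    have tN: "t \<notin> N"
    proof
      assume "t \<in> N"
      then have "t \<otimes> inv n \<in> N" using Nm Ninv n by auto
      moreover have "t \<otimes> inv n = inv s" unfolding t_def using sc nc by (simp add: m_assoc)
      ultimately have "inv (inv s) \<in> N" using Ninv by auto
      then show False using sN sc by simp
    qed
    have tK: "t \<in> K" using TKs tc tN by blast
    have t1: "t \<noteq> \<one>"
    proof
      assume "t = \<one>"
      then have "s \<otimes> t = s" using sc by simp
      moreover have "s \<otimes> t = n" unfolding t_def using sc nc by (simp add: lc2)
      ultimately show False using n sN by auto
    qed
    have ts: "t \<noteq> s"
    proof
      assume "t = s"
      moreover have "s \<otimes> t = n" unfolding t_def using sc nc by (simp add: lc2)
      ultimately show False using n by auto
    qed
    have tS: "t \<in> S0" using tK t1 Keq by auto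
    have "s \<otimes> t \<in> K" using sums_list2[OF s tS _ S0c] ts S0K by auto
    moreover have "s \<otimes> t = n" unfolding t_def using sc nc by (simp add: lc2)
    moreover have "inv n \<in> N" "inv n \<noteq> \<one>" using Ninv n nc by auto
    ultimately show False using EXs[of n "inv n"] nc by simp
  qed
qed

end


context bad
begin

lemma contra: False
proof (cases "card S0 = 0")
  case True then show False by (rule caseA0)
next
  case False
  show False
  proof (cases "card Y = 2")
    case True then show False by (rule caseB2)
  next
    case False
    then have "3 \<le> card Y" using b2 by linarith
    moreover have "1 \<le> card S0" using \<open>card S0 \<noteq> 0\<close> by linarith
    ultimately show False by (rule caseB3)
  qed
qed

end

context idx2
begin

lemma upper_eq:
  assumes Sa: "S \<subseteq> carrier G - {\<one>}" and cSa: "card S = card H"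
    and nab: "\<not> comm_group G" and m4: "4 \<le> card H"
  shows "subset_sums G S = carrier G"
proof -
  interpret upper G H S by unfold_locales (use Sa cSa in auto)
  show ?thesis
  proof (intro equalityI subsetI)
    fix x assume "x \<in> subset_sums G S" then show "x \<in> carrier G" using sums_closed Sc by blast
  next
    fix g assume g: "g \<in> carrier G"
    show "g \<in> subset_sums G S"
    proof (cases "g \<in> H")
      case False then show ?thesis using out_covered g by blast
    next
      case True
      show ?thesis
      proof (rule ccontr)
        assume gn: "g \<notin> subset_sums G S"
        interpret bad G H S g by unfold_locales (use cSa nab m4 True gn in auto)
        show False by (rule contra)
      qed
    qed
  qed
qed

lemma upper_gt:
  assumes Sa: "S \<subseteq> carrier G - {\<one>}" and cSa: "card H < card S"
  shows "subset_sums G S = carrier G"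
proof -
  interpret upper G H S by unfold_locales (use Sa cSa in auto)
  show ?thesis
  proof (intro equalityI subsetI)
    fix x assume "x \<in> subset_sums G S" then show "x \<in> carrier G" using sums_closed Sc by blast
  next
    fix g assume g: "g \<in> carrier G"
    show "g \<in> subset_sums G S"
    proof (cases "g \<in> H")
      case False then show ?thesis using out_covered g by blast
    next
      case True then show ?thesis using big cSa by blast
    qed
  qed
qed

lemma upper_ge:
  assumes S: "S \<subseteq> carrier G - {\<one>}" and cS: "card H \<le> card S"
    and nab: "\<not> comm_group G" and m4: "4 \<le> card H"
  shows "subset_sums G S = carrier G"
  using upper_eq[OF S _ nab m4] upper_gt[OF S] cS by linarith

lemma lower:
  "\<exists>S. S \<subseteq> carrier G - {\<one>} \<and> card S = card H - 1 \<and> subset_sums G S \<noteq> carrier G"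
proof -
  obtain u where u: "u \<in> carrier G" "u \<notin> H" using out_exists by blast
  have finH: "finite H" using Hsub by (intro finite_subset[OF _ fin])
  have "subset_sums G (H - {\<one>}) \<subseteq> H" using sums_sub[OF sub] by auto
  then have "subset_sums G (H - {\<one>}) \<noteq> carrier G" using u by auto
  moreover have "card (H - {\<one>}) = card H - 1" using finH by simp
  moreover have "H - {\<one>} \<subseteq> carrier G - {\<one>}" using Hsub by auto
  ultimately show ?thesis by blast
qed

lemma small_abelian: assumes "card H \<le> 2" shows "comm_group G"
proof -
  obtain u where u: "u \<in> carrier G" "u \<notin> H" using out_exists by blast
  have finH: "finite H" using Hsub by (intro finite_subset[OF _ fin])
  have "card (H - {\<one>}) \<le> 1" using finH assms by simp
  then have one: "x = y" if "x \<in> H - {\<one>}" "y \<in> H - {\<one>}" for x y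
    using card_le_Suc0_iff_eq[of "H - {\<one>}"] that finH by auto
  have cu: "u \<otimes> h = h \<otimes> u" if h: "h \<in> H" for h
  proof (cases "h = \<one>")
    case True then show ?thesis using u by simp
  next
    case False
    have hc: "h \<in> carrier G" using h Hsub by auto
    have "h \<otimes> u \<notin> H" using in_out(1)[OF h u] .
    moreover have "inv u \<notin> H" using u Hinv_iff by auto
    ultimately have k: "inv u \<otimes> (h \<otimes> u) \<in> H" using out_out u hc by auto
    have "inv u \<otimes> (h \<otimes> u) \<noteq> \<one>"
    proof
      assume "inv u \<otimes> (h \<otimes> u) = \<one>"
      then have "h \<otimes> u = u \<otimes> \<one>" using u hc by (metis inv_solve_left' m_closed one_closed)
      then show False using False u hc by simp
    qed
    then have "inv u \<otimes> (h \<otimes> u) = h" using one[of "inv u \<otimes> (h \<otimes> u)" h] k h False by auto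
    then have "u \<otimes> (inv u \<otimes> (h \<otimes> u)) = u \<otimes> h" by simp
    then show ?thesis using u hc by (simp add: lc2)
  qed
  have ch: "h \<otimes> k = k \<otimes> h" if "h \<in> H" "k \<in> H" for h k
  proof (cases "h = \<one> \<or> k = \<one>")
    case True then show ?thesis using that Hsub by auto
  next
    case False then have "h = k" using one that by auto
    then show ?thesis by simp
  qed
  show ?thesis using abelian_crit[OF u cu ch] .
qed

lemma order6_invol: assumes c3: "card H = 3" and nab: "\<not> comm_group G"
  and x: "x \<in> carrier G" "x \<notin> H" shows "x \<otimes> x = \<one>"
proof (rule ccontr)
  assume ne: "x \<otimes> x \<noteq> \<one>"
  have finH: "finite H" using Hsub by (intro finite_subset[OF _ fin])
  define h where "h = x \<otimes> x"
  have hH: "h \<in> H" "h \<in> carrier G" "h \<noteq> \<one>" unfolding h_def using out_out x ne by auto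
  have hh: "h \<otimes> h \<noteq> \<one>"
  proof
    assume hh1: "h \<otimes> h = \<one>"
    have "card {\<one>, h} < card H" using c3 hH card_length[of "[\<one>, h]"] by simp
    then have "\<exists>k\<in>H. k \<notin> {\<one>, h}" using avoid[of H "{\<one>, h}"] finH by simp
    then obtain k where k: "k \<in> H" "k \<notin> {\<one>, h}" by blast
    have kc: "k \<in> carrier G" using k Hsub by auto
    have "h \<otimes> k \<in> H" using hH k Hm by auto
    have sub: "{\<one>, h, k, h \<otimes> k} \<subseteq> H" using hH k Hm by auto
    have ih: "inv h = h" using mult_eq_one[OF hH(2) hH(2)] hh1 by simp
    have "h \<otimes> k \<noteq> \<one>" using mult_eq_one[OF hH(2) kc] ih k by auto
    moreover have "h \<otimes> k \<noteq> h" using hH kc k by simp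
    moreover have "h \<otimes> k \<noteq> k" using hH kc by simp
    ultimately have "card {\<one>, h, k, h \<otimes> k} = 4" using hH k by auto
    then show False using card_mono[OF finH sub] c3 by simp
  qed
  have hh2: "h \<otimes> h \<noteq> h" using hH by simp
  have sub: "{\<one>, h, h \<otimes> h} \<subseteq> H" using hH Hm by auto
  have "card {\<one>, h, h \<otimes> h} = 3" using hH hh hh2 by auto
  then have Heq: "H = {\<one>, h, h \<otimes> h}" using card_subset_eq[OF finH sub] c3 by simp
  have xh: "x \<otimes> h = h \<otimes> x" unfolding h_def using x by (simp add: m_assoc)
  have inT: "k \<in> {\<one>, h, inv h, h \<otimes> h}" if "k \<in> H" for k
    using that Heq by auto
  have cu: "x \<otimes> k = k \<otimes> x" if "k \<in> H" for k
    using pow_comm[OF x(1) hH(2) xh inT[OF that]] .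
  have ch: "a \<otimes> b = b \<otimes> a" if "a \<in> H" "b \<in> H" for a b
  proof -
    have ac: "a \<in> carrier G" using that Hsub by auto
    have "h \<otimes> a = a \<otimes> h" using pow_comm[OF hH(2) hH(2) refl inT[OF that(1)]] .
    then have "a \<otimes> h = h \<otimes> a" by simp
    then show ?thesis using pow_comm[OF ac hH(2) _ inT[OF that(2)]] by simp
  qed
  show False using abelian_crit[OF x(1) x(2) cu ch] nab by simp
qed

end


context idx2
begin

lemma s3_fail: assumes c3: "card H = 3" and nab: "\<not> comm_group G"
  shows "\<one> \<notin> subset_sums G (carrier G - H)"
proof
  assume "\<one> \<in> subset_sums G (carrier G - H)"
  then obtain xs where xs: "distinct xs" "xs \<noteq> []" "set xs \<subseteq> carrier G - H" "list_prod G xs = \<one>"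
    unfolding subset_sums_def by auto
  have "card (set xs) \<le> card (carrier G - H)" using xs(3) fin by (intro card_mono) auto
  then have len: "length xs \<le> 3" using distinct_card[OF xs(1)] card_out c3 by simp
  obtain a xs1 where a: "xs = a # xs1" using xs(2) by (cases xs) auto
  have ac: "a \<in> carrier G" "a \<notin> H" using xs(3) a by auto
  show False
  proof (cases xs1)
    case Nil
    then have "a = \<one>" using xs(4) a ac by simp
    then show False using ac by simp
  next
    case (Cons b xs2)
    note Cb = Cons
    have bc: "b \<in> carrier G" "b \<notin> H" "b \<noteq> a" using xs a Cb by auto
    show False
    proof (cases xs2)
      case Nil
      then have "a \<otimes> b = \<one>" using xs(4) a Cb bc by simp
      then have "b = inv a" using mult_eq_one[OF ac(1) bc(1)] by simp
      moreover have "inv a = a" using mult_eq_one[OF ac(1) ac(1)] order6_invol[OF c3 nab ac] by simp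
      ultimately show False using bc by simp
    next
      case (Cons c xs3)
      have xs3: "xs3 = []" using len a Cb Cons by simp
      have cc: "c \<in> carrier G" "c \<notin> H" using xs a Cb Cons by auto
      have "a \<otimes> (b \<otimes> c) = \<one>" using xs(4) a Cb Cons xs3 cc bc by simp
      moreover have "b \<otimes> c \<in> H" using out_out bc cc by auto
      then have "a \<otimes> (b \<otimes> c) \<notin> H" using in_out(2)[of "b \<otimes> c" a] ac by auto
      ultimately show False by simp
    qed
  qed
qed

end

theorem theorem1p3:
  fixes G (structure)
  assumes "group G"
    and "finite (carrier G)"
    and "\<not> comm_group G"
    and "even (order G)"
    and "\<exists>H. subgroup H G \<and> card (rcosets H) = 2"
  shows "(order G = 6 \<longrightarrow> crit_num G = 4) \<and> (order G \<noteq> 6 \<longrightarrow> crit_num G = order G div 2)"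
proof -
  from assms(5) obtain H where H: "subgroup H G" "card (rcosets H) = 2" by blast
  interpret group G by (rule assms(1))
  interpret idx2 G H using idx2.intro[OF assms(1) idx2_axioms.intro[OF assms(2) H(1) H(2)]] .
  have m3: "3 \<le> card H" using small_abelian assms(3) by linarith
  have ord: "order G = 2 * card H" by (rule order_eq)
  define P where "P = (\<lambda>t. \<forall>S. S \<subseteq> carrier G - {\<one>} \<longrightarrow> t \<le> card S \<longrightarrow> subset_sums G S = carrier G)"
  have cn: "crit_num G = (LEAST t. P t)" unfolding crit_num_def P_def ..
  show ?thesis
  proof (intro conjI impI)
    assume "order G = 6"
    then have c3: "card H = 3" using ord by simp
    have P4: "P 4" unfolding P_def using upper_gt c3 by auto
    have low: "4 \<le> t" if "P t" for t
    proof (rule ccontr)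
      assume "\<not> 4 \<le> t"
      have sub: "carrier G - H \<subseteq> carrier G - {\<one>}" by auto
      have "card (carrier G - H) = 3" using card_out c3 by simp
      then have "subset_sums G (carrier G - H) = carrier G"
        using that sub \<open>\<not> 4 \<le> t\<close> unfolding P_def by auto
      then show False using s3_fail[OF c3 assms(3)] by simp
    qed
    show "crit_num G = 4" unfolding cn by (rule Least_equality[of P, OF P4 low])
  next
    assume "order G \<noteq> 6"
    then have m4: "4 \<le> card H" using ord m3 by simp
    have Pm: "P (card H)" unfolding P_def using upper_ge[OF _ _ assms(3) m4] by auto
    have low: "card H \<le> t" if "P t" for t
    proof (rule ccontr)
      assume "\<not> card H \<le> t"
      obtain S where S: "S \<subseteq> carrier G - {\<one>}" "card S = card H - 1" "subset_sums G S \<noteq> carrier G"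
        using lower by blast
      then show False using that \<open>\<not> card H \<le> t\<close> unfolding P_def by auto
    qed
    have "crit_num G = card H" unfolding cn by (rule Least_equality[of P, OF Pm low])
    then show "crit_num G = order G div 2" using ord by simp
  qed
qed


end
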